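(* Let $c_0\ge0$, $c_1>0$, $a\in\mathbb{R}$, $v_\circ>0$, let $v$ solve $v'=a-c_0v-c_1v^2$, $v(0)=v_\circ$, $s(t)=\int_0^tv$, and suppose one of the following holds: (c) $w$ real, $a\ge0$, $v_\circ>v_\infty$, with $(t_{\min},t_{\max})=(t_\infty,\infty)$; (d) $w$ real, $a<0$, with $(t_{\min},t_{\max})=(t_\infty,t_\circ)$; (e) $w$ complex, with $(t_{\min},t_{\max})=(t_{v_\infty},t_{v_\circ})$. Let $t_\star\in(t_{\min},t_{\max})$, $\zeta=s(t_\star)$, $f(t)=s(t)-\zeta$, and define $t_0=0$ and $$t_{k+1}=\begin{cases}t_k-\dfrac{f(t_k)}{f'(t_k)+f(t_k)/(t_k-t_{\min})},& f(t_k)>0,\\[2mm] t_k-\dfrac{f(t_k)}{f'(t_k)},& f(t_k)\le0.\end{cases}$$ Then all $t_k$ lie in $(t_{\min},t_{\max})$, $t_k\to t_\star$, and the convergence is quadratic: $\limsup_{k\to\infty}|t_{k+1}-t_\star|/|t_k-t_\star|^2<\infty$ (over $k$ with $t_k\neq t_\star$).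
   Context: Notation: $w=\sqrt{c_0^2+4ac_1}\ge 0$ when $c_0^2+4ac_1\ge0$ ("$w$ real"); when $c_0^2+4ac_1<0$ we say "$w$ is complex" and write $|w|=\sqrt{-(c_0^2+4ac_1)}>0$. Set $\alpha=(w+c_0)/2$, $\beta=(w-c_0)/2$, $\gamma=c_1v_\circ+\alpha$, $v_\infty=\beta/c_1$, $\mathcal{L}(x,c)=c^{-1}\log(1-cx)$ ($c\ne0$), $\mathcal{L}(x,0)=-x$, $t_\circ=\mathcal{L}\big(\frac{v_\circ}{a+v_\circ\beta},w\big)$ (zero of $v$), $t_\infty=\mathcal{L}(1/\gamma,w)$ (pole of $v$); in the complex case $\theta_0=\arctan\frac{v_\circ|w|}{v_\circ c_0+2|a|}$, $\theta_1=\arctan\frac{|w|}{2c_1v_\circ+c_0}\in(0,\pi/2]$, $t_{v_\circ}=2\theta_0/|w|$, $t_{v_\infty}=-2\theta_1/|w|$. On $(t_{\min},t_{\max})$ the solution $v$ is finite and positive. *)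

theory Defs
  imports "HOL-Analysis.Analysis"
begin

text \<open>Discriminant \<open>c0^2 + 4 a c1\<close>; w is real iff it is \<open>\<ge> 0\<close>.\<close>
definition disc :: "real \<Rightarrow> real \<Rightarrow> real \<Rightarrow> real" where
  "disc a c0 c1 = c0\<^sup>2 + 4 * a * c1"

definition wR :: "real \<Rightarrow> real \<Rightarrow> real \<Rightarrow> real" where
  "wR a c0 c1 = sqrt (disc a c0 c1)"
definition wAbs :: "real \<Rightarrow> real \<Rightarrow> real \<Rightarrow> real" where
  "wAbs a c0 c1 = sqrt (- disc a c0 c1)"

definition alphaR :: "real \<Rightarrow> real \<Rightarrow> real \<Rightarrow> real" where
  "alphaR a c0 c1 = (wR a c0 c1 + c0) / 2"
definition betaR :: "real \<Rightarrow> real \<Rightarrow> real \<Rightarrow> real" where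
  "betaR a c0 c1 = (wR a c0 c1 - c0) / 2"
definition gammaR :: "real \<Rightarrow> real \<Rightarrow> real \<Rightarrow> real \<Rightarrow> real" where
  "gammaR a c0 c1 vc = c1 * vc + alphaR a c0 c1"
definition vinf :: "real \<Rightarrow> real \<Rightarrow> real \<Rightarrow> real" where
  "vinf a c0 c1 = betaR a c0 c1 / c1"

definition LL :: "real \<Rightarrow> real \<Rightarrow> real" where
  "LL x c = (if c \<noteq> 0 then ln (1 - c * x) / c else - x)"

definition t_circ :: "real \<Rightarrow> real \<Rightarrow> real \<Rightarrow> real \<Rightarrow> real" where
  "t_circ a c0 c1 vc = LL (vc / (a + vc * betaR a c0 c1)) (wR a c0 c1)"
definition t_inf :: "real \<Rightarrow> real \<Rightarrow> real \<Rightarrow> real \<Rightarrow> real" where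
  "t_inf a c0 c1 vc = LL (1 / gammaR a c0 c1 vc) (wR a c0 c1)"

definition theta0 :: "real \<Rightarrow> real \<Rightarrow> real \<Rightarrow> real \<Rightarrow> real" where
  "theta0 a c0 c1 vc = arctan (vc * wAbs a c0 c1 / (vc * c0 + 2 * \<bar>a\<bar>))"
definition theta1 :: "real \<Rightarrow> real \<Rightarrow> real \<Rightarrow> real \<Rightarrow> real" where
  "theta1 a c0 c1 vc = arctan (wAbs a c0 c1 / (2 * c1 * vc + c0))"
definition t_vcirc :: "real \<Rightarrow> real \<Rightarrow> real \<Rightarrow> real \<Rightarrow> real" where
  "t_vcirc a c0 c1 vc = 2 * theta0 a c0 c1 vc / wAbs a c0 c1"
definition t_vinf :: "real \<Rightarrow> real \<Rightarrow> real \<Rightarrow> real \<Rightarrow> real" where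
  "t_vinf a c0 c1 vc = - 2 * theta1 a c0 c1 vc / wAbs a c0 c1"

definition sint :: "(real \<Rightarrow> real) \<Rightarrow> real \<Rightarrow> real" where
  "sint v t = (if 0 \<le> t then integral {0..t} v else - integral {t..0} v)"

definition newton_step :: "(real \<Rightarrow> real) \<Rightarrow> (real \<Rightarrow> real) \<Rightarrow> real \<Rightarrow> real \<Rightarrow> real" where
  "newton_step f f' tmin t =
     (if f t > 0 then t - f t / (f' t + f t / (t - tmin)) else t - f t / f' t)"

fun newton_seq :: "(real \<Rightarrow> real) \<Rightarrow> (real \<Rightarrow> real) \<Rightarrow> real \<Rightarrow> nat \<Rightarrow> real" where
  "newton_seq f f' tmin 0 = 0"
| "newton_seq f f' tmin (Suc k) = newton_step f f' tmin (newton_seq f f' tmin k)"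

end

theory Submission
  imports Defs
begin


lemma mvt_any:
  fixes f f' :: "real \<Rightarrow> real"
  assumes "\<And>s. min x y \<le> s \<Longrightarrow> s \<le> max x y \<Longrightarrow> (f has_real_derivative f' s) (at s)"
  shows "\<exists>z. min x y \<le> z \<and> z \<le> max x y \<and> f x - f y = f' z * (x - y)"
proof (cases "x < y")
  case True
  then obtain z where "x < z" "z < y" "f y - f x = (y - x) * f' z"
    using MVT2[of x y f f'] assms by auto
  then show ?thesis using True by (intro exI[of _ z]) (auto simp: algebra_simps)
next
  case False
  show ?thesis
  proof (cases "x = y")
    case True then show ?thesis by (intro exI[of _ x]) auto
  next
    case False
    with \<open>\<not> x < y\<close> have "y < x" by auto
    then obtain z where "y < z" "z < x" "f x - f y = (x - y) * f' z"
      using MVT2[of y x f f'] assms by auto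
    then show ?thesis using \<open>y < x\<close> by (intro exI[of _ z]) (auto simp: algebra_simps)
  qed
qed

lemma newton_err:
  fixes \<phi> \<phi>1 \<phi>2 :: "real \<Rightarrow> real"
  assumes d1: "\<And>s. p \<le> s \<Longrightarrow> s \<le> q \<Longrightarrow> (\<phi> has_real_derivative \<phi>1 s) (at s)"
      and d2: "\<And>s. p \<le> s \<Longrightarrow> s \<le> q \<Longrightarrow> (\<phi>1 has_real_derivative \<phi>2 s) (at s)"
      and bM: "\<And>s. p \<le> s \<Longrightarrow> s \<le> q \<Longrightarrow> \<bar>\<phi>2 s\<bar> \<le> M"
    and m: "m > 0" "\<phi>1 t \<ge> m" and r: "\<phi> r = 0" and "p \<le> t" "t \<le> q" "p \<le> r" "r \<le> q"
  shows "\<bar>t - \<phi> t / \<phi>1 t - r\<bar> \<le> (M / m) * (t - r)\<^sup>2"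
proof -
  obtain \<xi> where x: "min t r \<le> \<xi>" "\<xi> \<le> max t r" "\<phi> t - \<phi> r = \<phi>1 \<xi> * (t - r)"
    using mvt_any[of t r \<phi> \<phi>1] d1 assms(7-10) by (metis max.bounded_iff min.bounded_iff order_trans)
  obtain \<eta> where y: "min t \<xi> \<le> \<eta>" "\<eta> \<le> max t \<xi>" "\<phi>1 t - \<phi>1 \<xi> = \<phi>2 \<eta> * (t - \<xi>)"
    using mvt_any[of t \<xi> \<phi>1 \<phi>2] d2 assms(7-10) x(1,2)
    by (smt (verit, best))
  have pe: "p \<le> \<eta>" "\<eta> \<le> q" using x y assms(7-10) by auto
  have tx: "\<bar>t - \<xi>\<bar> \<le> \<bar>t - r\<bar>" using x by auto
  have pos: "\<phi>1 t > 0" using m by auto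
  have e: "t - \<phi> t / \<phi>1 t - r = (t - r) * (\<phi>2 \<eta> * (t - \<xi>)) / \<phi>1 t"
  proof -
    have "\<phi> t = (\<phi>1 t - \<phi>2 \<eta> * (t - \<xi>)) * (t - r)"
      using x(3) y(3) r by (simp add: algebra_simps)
    then show ?thesis using pos by (simp add: field_simps)
  qed
  have "\<bar>(t - r) * (\<phi>2 \<eta> * (t - \<xi>))\<bar> \<le> \<bar>t - r\<bar> * (M * \<bar>t - r\<bar>)"
    unfolding abs_mult
    using bM[OF pe] by (intro mult_left_mono mult_mono bM pe tx) auto
  also have "\<dots> = M * (t - r)\<^sup>2" by (simp add: power2_eq_square abs_mult_self_eq)
  finally have n: "\<bar>(t - r) * (\<phi>2 \<eta> * (t - \<xi>))\<bar> \<le> M * (t - r)\<^sup>2" .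
  have "\<bar>t - \<phi> t / \<phi>1 t - r\<bar> = \<bar>(t - r) * (\<phi>2 \<eta> * (t - \<xi>))\<bar> / \<phi>1 t"
    using e pos by simp
  also have "\<dots> \<le> M * (t - r)\<^sup>2 / m"
    using n m pos by (intro frac_le) auto
  finally show ?thesis by simp
qed



lemma newton_generic:
  fixes F v v' :: "real \<Rightarrow> real" and I :: "real set"
  assumes openI: "open I"
    and intv: "\<And>x y z. x \<in> I \<Longrightarrow> z \<in> I \<Longrightarrow> x \<le> y \<Longrightarrow> y \<le> z \<Longrightarrow> y \<in> I"
    and lower: "\<And>x. x \<in> I \<Longrightarrow> tmin < x"
    and down: "\<And>x y. x \<in> I \<Longrightarrow> tmin < y \<Longrightarrow> y \<le> x \<Longrightarrow> y \<in> I"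
    and I0: "0 \<in> I" and Is: "ts \<in> I"
    and dF: "\<And>t. t \<in> I \<Longrightarrow> (F has_real_derivative v t) (at t)"
    and dv: "\<And>t. t \<in> I \<Longrightarrow> (v has_real_derivative v' t) (at t)"
    and cv': "continuous_on I v'"
    and pos: "\<And>t. t \<in> I \<Longrightarrow> v t > 0" and dec: "\<And>t. t \<in> I \<Longrightarrow> v' t \<le> 0"
    and F0: "F ts = 0"
  shows "(\<forall>k. newton_seq F v tmin k \<in> I) \<and> newton_seq F v tmin \<longlonglongrightarrow> ts
     \<and> (\<exists>C. \<forall>\<^sub>F k in sequentially. newton_seq F v tmin k \<noteq> ts \<longrightarrow>
           \<bar>newton_seq F v tmin (Suc k) - ts\<bar> / \<bar>newton_seq F v tmin k - ts\<bar>\<^sup>2 \<le> C)"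
proof -
  define N where "N = newton_step F v tmin"
  define tk where "tk = newton_seq F v tmin"
  have tkS: "tk (Suc k) = N (tk k)" for k by (simp add: tk_def N_def)
  have tk0: "tk 0 = 0" by (simp add: tk_def)
  have Fmono: "F x < F y" if "x \<in> I" "y \<in> I" "x < y" for x y
  proof (rule DERIV_pos_imp_increasing[OF that(3)])
    fix s assume "x \<le> s" "s \<le> y"
    then have "s \<in> I" using intv that by blast
    then show "\<exists>d. DERIV F s :> d \<and> d > 0" using dF pos by blast
  qed
  have vmono: "v y \<le> v x" if "x \<in> I" "y \<in> I" "x \<le> y" for x y
  proof (rule DERIV_nonpos_imp_nonincreasing[OF that(3)])
    fix s assume "x \<le> s" "s \<le> y"
    then have "s \<in> I" using intv that by blast
    then show "\<exists>d. DERIV v s :> d \<and> d \<le> 0" using dv dec by blast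
  qed
  have Fpos: "F t > 0 \<longleftrightarrow> t > ts" if "t \<in> I" for t
    using Fmono[OF that Is] Fmono[OF Is that] F0 by (cases t ts rule: linorder_cases) auto
  have right: "N t \<in> I \<and> N t < t" if t: "t \<in> I" "t > ts" for t
  proof -
    have Ft: "F t > 0" using Fpos t by auto
    have d: "t - tmin > 0" using lower t by auto
    have q: "F t / (t - tmin) > 0" using Ft d by auto
    define D where "D = v t + F t / (t - tmin)"
    have D: "D > F t / (t - tmin)" using pos[OF t(1)] by (simp add: D_def)
    have Dp: "D > 0" using D q by linarith
    have "F t / D < F t / (F t / (t - tmin))"
    proof -
      have "0 < D * (F t / (t - tmin))" using Dp q by (rule mult_pos_pos)
      then show ?thesis using D Ft by (intro divide_strict_left_mono) auto
    qed
    also have "\<dots> = t - tmin" using Ft d by simp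
    finally have lt: "F t / D < t - tmin" .
    have NT: "N t = t - F t / D" using Ft by (simp add: N_def newton_step_def D_def)
    have "F t / D > 0" using Ft Dp by auto
    then show ?thesis using NT lt down[OF t(1), of "N t"] by auto
  qed
  have left: "t \<le> N t \<and> N t \<le> ts" if t: "t \<in> I" "t \<le> ts" for t
  proof -
    have Ft: "\<not> F t > 0" using Fpos t by auto
    have NT: "N t = t - F t / v t" using Ft by (simp add: N_def newton_step_def)
    have vt: "v t > 0" using pos t by auto
    show ?thesis
    proof (cases "t = ts")
      case True then show ?thesis using NT F0 by simp
    next
      case False
      then have lt: "t < ts" using t by auto
      obtain z where z: "t < z" "z < ts" "F ts - F t = (ts - t) * v z"
        using MVT2[OF lt, of F v] dF intv[OF t(1) Is] by auto
      have "v z \<le> v t" using vmono[OF t(1) intv[OF t(1) Is] ] z by auto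
      then have "- F t \<le> (ts - t) * v t" using z F0 lt
        by (smt (verit, best) mult_left_mono)
      then have "- F t / v t \<le> ts - t" unfolding pos_divide_le_eq[OF vt] .
      moreover have "- F t / v t \<ge> 0" using Ft vt by (simp add: divide_nonpos_pos)
      ultimately show ?thesis using NT by auto
    qed
  qed
  have inI: "tk k \<in> I" for k
  proof (induction k)
    case 0 then show ?case using tk0 I0 by simp
  next
    case (Suc k)
    show ?case
    proof (cases "tk k > ts")
      case True then show ?thesis using right Suc tkS by auto
    next
      case False
      then have "tk k \<le> N (tk k)" "N (tk k) \<le> ts" using left Suc by auto
      then show ?thesis using intv[OF Suc Is] tkS by auto
    qed
  qed
  have fix_right: "L = ts" if L: "L \<in> I" "L \<ge> ts" "(\<lambda>k. tk (Suc k)) \<longlonglongrightarrow> L"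
      "\<forall>k. tk k > ts" "tk \<longlonglongrightarrow> L" for L
  proof (rule ccontr)
    assume "L \<noteq> ts"
    then have Lt: "L > ts" using L by auto
    have FL: "F L > 0" using Fpos L Lt by auto
    have d: "L - tmin > 0" using lower L by auto
    define G where "G = (\<lambda>t. t - F t / (v t + F t / (t - tmin)))"
    have cF: "isCont F L" using dF[OF L(1)] DERIV_isCont by blast
    have cv: "isCont v L" using dv[OF L(1)] DERIV_isCont by blast
    have den: "v L + F L / (L - tmin) \<noteq> 0" using pos[OF L(1)] FL d
      by (smt (verit) divide_pos_pos)
    have "isCont G L" unfolding G_def using cF cv d den by (intro continuous_intros) auto
    then have "(\<lambda>k. G (tk k)) \<longlonglongrightarrow> G L" using L(5) isCont_tendsto_compose by blast
    moreover have "G (tk k) = tk (Suc k)" for k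
    proof -
      have "F (tk k) > 0" using L(4) Fpos[OF inI[of "k"]] by auto
      then show ?thesis by (simp add: tkS N_def newton_step_def G_def)
    qed
    ultimately have "(\<lambda>k. tk (Suc k)) \<longlonglongrightarrow> G L" by simp
    then have "G L = L" using L(3) LIMSEQ_unique by blast
    then have "F L / (v L + F L / (L - tmin)) = 0" by (simp add: G_def)
    then show False using FL den by simp
  qed
  have fix_left: "L = ts" if L: "L \<in> I" "(\<lambda>k. tk (Suc (k + j))) \<longlonglongrightarrow> L"
      "\<forall>k. tk (k + j) \<le> ts" "(\<lambda>k. tk (k + j)) \<longlonglongrightarrow> L" for L j
  proof -
    define G where "G = (\<lambda>t. t - F t / v t)"
    have cF: "isCont F L" using dF[OF L(1)] DERIV_isCont by blast
    have cv: "isCont v L" using dv[OF L(1)] DERIV_isCont by blast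
    have vL: "v L \<noteq> 0" using pos[OF L(1)] by simp
    have "isCont G L" unfolding G_def using cF cv vL by (intro continuous_intros) auto
    then have "(\<lambda>k. G (tk (k + j))) \<longlonglongrightarrow> G L" using L(4) isCont_tendsto_compose by blast
    moreover have "G (tk (k + j)) = tk (Suc (k + j))" for k
    proof -
      have "tk (k + j) \<le> ts" using L(3) by blast
      then have "\<not> F (tk (k + j)) > 0" using Fpos[OF inI[of "k+j"]] by auto
      then show ?thesis by (simp add: tkS N_def newton_step_def G_def)
    qed
    ultimately have "(\<lambda>k. tk (Suc (k + j))) \<longlonglongrightarrow> G L" by simp
    then have "G L = L" using L(2) LIMSEQ_unique by blast
    then have "F L = 0" using vL by (simp add: G_def)
    then show ?thesis using Fpos[OF L(1)] Fpos[OF Is] F0 Fmono[OF L(1) Is] Fmono[OF Is L(1)]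
      by (cases L ts rule: linorder_cases) auto
  qed
  have conv: "tk \<longlonglongrightarrow> ts"
  proof (cases "\<exists>j. tk j \<le> ts")
    case False
    then have all: "\<forall>k. tk k > ts" by (simp add: not_le)
    have "decseq tk" unfolding decseq_Suc_iff using right inI all tkS by (simp add: less_imp_le)
    then obtain L where L: "tk \<longlonglongrightarrow> L" "\<forall>i. L \<le> tk i"
      using decseq_convergent[of tk ts] all less_imp_le by blast
    have Lts: "L \<ge> ts" using LIMSEQ_le_const[OF L(1), of ts] all less_imp_le by blast
    have LI: "L \<in> I" using intv[OF Is inI[of 0] Lts L(2)[rule_format, of 0]] .
    have "(\<lambda>k. tk (Suc k)) \<longlonglongrightarrow> L" using L(1) LIMSEQ_Suc by blast
    then have "L = ts" using fix_right[OF LI Lts _ all L(1)] by blast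
    then show ?thesis using L by simp
  next
    case True
    then obtain j where j: "tk j \<le> ts" by blast
    have after: "tk (k + j) \<le> ts" for k
    proof (induction k)
      case 0 then show ?case using j by simp
    next
      case (Suc k) then show ?case using left[OF inI] tkS by simp
    qed
    define u where "u = (\<lambda>k. tk (k + j))"
    have "incseq u" unfolding incseq_Suc_iff u_def using left[OF inI after] tkS by simp
    then obtain L where L: "u \<longlonglongrightarrow> L" "\<forall>i. u i \<le> L"
      using incseq_convergent[of u ts] after u_def by blast
    have Lts: "L \<le> ts" using LIMSEQ_le_const2[OF L(1), of ts] after u_def by blast
    have LI: "L \<in> I" using intv[OF inI[of j] Is, of L] L(2)[rule_format, of 0] Lts u_def by simp
    have "(\<lambda>k. u (Suc k)) \<longlonglongrightarrow> L" using L(1) LIMSEQ_Suc by blast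
    then have "L = ts" using fix_left[OF LI _ _ ] after L(1) u_def by simp
    then show ?thesis using L(1) u_def LIMSEQ_offset[of tk j ts] by simp
  qed
  obtain \<delta> where \<delta>: "\<delta> > 0" "cball ts \<delta> \<subseteq> I"
    using openI Is open_contains_cball by blast
  define p where "p = ts - \<delta>"
  define q where "q = ts + \<delta>"
  have pqI: "s \<in> I" if "p \<le> s" "s \<le> q" for s
    using that \<delta>(2) unfolding p_def q_def by (auto simp: subset_iff mem_cball dist_real_def)
  have pqs: "{p..q} \<subseteq> I" using pqI by auto
  have cvI: "continuous_on I v"
    by (rule continuous_at_imp_continuous_on) (use dv DERIV_isCont in blast)
  have cv: "continuous_on {p..q} v" using continuous_on_subset[OF cvI pqs] .
  have cv'pq: "continuous_on {p..q} v'" using continuous_on_subset[OF cv' pqs] .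
  have pq: "p \<le> q" "p < ts" "ts < q" using \<delta>(1) by (auto simp: p_def q_def)
  obtain xm where xm: "xm \<in> {p..q}" "\<And>y. y \<in> {p..q} \<Longrightarrow> v xm \<le> v y"
    using continuous_attains_inf[OF compact_Icc _ cv] pq by auto
  define m where "m = v xm"
  have m: "m > 0" using pos pqI xm(1) by (auto simp: m_def)
  have mle: "m \<le> v s" if "p \<le> s" "s \<le> q" for s using xm(2) that by (auto simp: m_def)
  have c1: "continuous_on {p..q} (\<lambda>s. \<bar>v' s\<bar>)" using cv'pq by (intro continuous_intros)
  obtain x1 where x1: "x1 \<in> {p..q}" "\<And>y. y \<in> {p..q} \<Longrightarrow> \<bar>v' y\<bar> \<le> \<bar>v' x1\<bar>"
    using continuous_attains_sup[OF compact_Icc _ c1] pq by auto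
  define M1 where "M1 = \<bar>v' x1\<bar>"
  define g2 where "g2 = (\<lambda>s. v' s * (s - tmin) + 2 * v s)"
  have c2: "continuous_on {p..q} (\<lambda>s. \<bar>g2 s\<bar>)" unfolding g2_def
    using cv'pq cv by (intro continuous_intros)
  obtain x2 where x2: "x2 \<in> {p..q}" "\<And>y. y \<in> {p..q} \<Longrightarrow> \<bar>g2 y\<bar> \<le> \<bar>g2 x2\<bar>"
    using continuous_attains_sup[OF compact_Icc _ c2] pq by auto
  define M2 where "M2 = \<bar>g2 x2\<bar>"
  define g where "g = (\<lambda>s. F s * (s - tmin))"
  define g1 where "g1 = (\<lambda>s. v s * (s - tmin) + F s)"
  have dg: "(g has_real_derivative g1 s) (at s)" if "s \<in> I" for s
    unfolding g_def g1_def using dF[OF that]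
    by (auto intro!: derivative_eq_intros simp: algebra_simps)
  have dg1: "(g1 has_real_derivative g2 s) (at s)" if "s \<in> I" for s
    unfolding g2_def g1_def using dF[OF that] dv[OF that]
    by (auto intro!: derivative_eq_intros simp: algebra_simps)
  have dtm: "ts - tmin > 0" using lower Is by auto
  define C where "C = max (M1 / m) (M2 / (m * (ts - tmin)))"
  have bound: "\<bar>N t - ts\<bar> \<le> C * (t - ts)\<^sup>2" if t: "p \<le> t" "t \<le> q" for t
  proof (cases "t > ts")
    case True
    have tI: "t \<in> I" using pqI t by auto
    have Ft: "F t > 0" using Fpos tI True by auto
    have d: "t - tmin > 0" using lower tI by auto
    have NT: "N t = t - g t / g1 t" using Ft d
      by (simp add: N_def newton_step_def g_def g1_def) (simp add: field_simps)
    have "g1 t \<ge> v t * (t - tmin)" using Ft by (simp add: g1_def)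
    moreover have "v t * (t - tmin) \<ge> m * (ts - tmin)"
      using mle[OF t] True m dtm by (intro mult_mono) auto
    ultimately have g1m: "g1 t \<ge> m * (ts - tmin)" by linarith
    have "\<bar>t - g t / g1 t - ts\<bar> \<le> (M2 / (m * (ts - tmin))) * (t - ts)\<^sup>2"
    proof (rule newton_err[of ts q g g1 g2])
      show "\<And>s. ts \<le> s \<Longrightarrow> s \<le> q \<Longrightarrow> (g has_real_derivative g1 s) (at s)"
        using dg pqI pq by auto
      show "\<And>s. ts \<le> s \<Longrightarrow> s \<le> q \<Longrightarrow> (g1 has_real_derivative g2 s) (at s)"
        using dg1 pqI pq by auto
      show "\<And>s. ts \<le> s \<Longrightarrow> s \<le> q \<Longrightarrow> \<bar>g2 s\<bar> \<le> M2"
        using x2(2) pq by (auto simp: M2_def)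
    qed (use m dtm g1m True t pq F0 in \<open>auto simp: g_def\<close>)
    moreover have "M2 / (m * (ts - tmin)) * (t - ts)\<^sup>2 \<le> C * (t - ts)\<^sup>2"
      by (intro mult_right_mono) (auto simp: C_def)
    ultimately show ?thesis using NT by simp
  next
    case False
    have tI: "t \<in> I" using pqI t by auto
    have Ft: "\<not> F t > 0" using Fpos tI False by auto
    have NT: "N t = t - F t / v t" using Ft by (simp add: N_def newton_step_def)
    have "\<bar>t - F t / v t - ts\<bar> \<le> (M1 / m) * (t - ts)\<^sup>2"
    proof (rule newton_err[of p q F v v'])
      show "\<And>s. p \<le> s \<Longrightarrow> s \<le> q \<Longrightarrow> (F has_real_derivative v s) (at s)"
        using dF pqI by auto
      show "\<And>s. p \<le> s \<Longrightarrow> s \<le> q \<Longrightarrow> (v has_real_derivative v' s) (at s)"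
        using dv pqI by auto
      show "\<And>s. p \<le> s \<Longrightarrow> s \<le> q \<Longrightarrow> \<bar>v' s\<bar> \<le> M1"
        using x1(2) by (auto simp: M1_def)
    qed (use m mle t pq F0 in auto)
    moreover have "M1 / m * (t - ts)\<^sup>2 \<le> C * (t - ts)\<^sup>2"
      by (intro mult_right_mono) (auto simp: C_def)
    ultimately show ?thesis using NT by simp
  qed
  have ev: "\<forall>\<^sub>F k in sequentially. dist (tk k) ts < \<delta>"
    using conv \<delta>(1) tendsto_iff by blast
  have "\<forall>\<^sub>F k in sequentially. tk k \<noteq> ts \<longrightarrow> \<bar>tk (Suc k) - ts\<bar> / \<bar>tk k - ts\<bar>\<^sup>2 \<le> C"
    using ev
  proof (rule eventually_mono, intro impI)
    fix k assume k: "dist (tk k) ts < \<delta>" "tk k \<noteq> ts"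
    have "p \<le> tk k" "tk k \<le> q" using k by (auto simp: p_def q_def dist_real_def)
    then have b: "\<bar>tk (Suc k) - ts\<bar> \<le> C * \<bar>tk k - ts\<bar>\<^sup>2" using bound tkS by simp
    have "\<bar>tk k - ts\<bar>\<^sup>2 > 0" using k by simp
    then show "\<bar>tk (Suc k) - ts\<bar> / \<bar>tk k - ts\<bar>\<^sup>2 \<le> C" using b by (simp add: divide_le_eq)
  qed
  then show ?thesis using inI conv unfolding tk_def by blast
qed



lemma sint_deriv:
  fixes v :: "real \<Rightarrow> real"
  assumes openI: "open I"
    and intv: "\<And>x y z. x \<in> I \<Longrightarrow> z \<in> I \<Longrightarrow> x \<le> y \<Longrightarrow> y \<le> z \<Longrightarrow> y \<in> I"
    and I0: "0 \<in> I" and t: "t \<in> I" and cv: "continuous_on I v"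
  shows "(sint v has_real_derivative v t) (at t)"
proof -
  have mI: "min 0 t \<in> I" and MI: "max 0 t \<in> I" using I0 t by (auto simp: min_def max_def)
  obtain e1 where e1: "e1 > 0" "ball (min 0 t) e1 \<subseteq> I" using openI mI open_contains_ball by blast
  obtain e2 where e2: "e2 > 0" "ball (max 0 t) e2 \<subseteq> I" using openI MI open_contains_ball by blast
  define p where "p = min 0 t - e1 / 2"
  define q where "q = max 0 t + e2 / 2"
  have pI: "p \<in> I" using e1 by (intro subsetD[OF e1(2)]) (auto simp: p_def dist_real_def)
  have qI: "q \<in> I" using e2 by (intro subsetD[OF e2(2)]) (auto simp: q_def dist_real_def)
  have pqs: "{p..q} \<subseteq> I"
  proof
    fix x assume "x \<in> {p..q}" then show "x \<in> I" using intv[OF pI qI, of x] by simp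
  qed
  have cpq: "continuous_on {p..q} v" using continuous_on_subset[OF cv pqs] .
  have ints: "v integrable_on {p..x}" if "x \<le> q" for x
    using continuous_on_subset[OF cpq] that by (intro integrable_continuous_interval) auto
  have p0: "p < 0" "p < t" "0 < q" "t < q" using e1 e2 by (auto simp: p_def q_def)
  have eq: "integral {p..x} v - integral {p..0} v = sint v x" if x: "x \<in> {p<..<q}" for x
  proof (cases "0 \<le> x")
    case True
    have "integral {p..0} v + integral {0..x} v = integral {p..x} v"
      using Henstock_Kurzweil_Integration.integral_combine[where a=p and c=0 and b=x and f=v] True p0 x ints[of x] by auto
    then show ?thesis using True by (simp add: sint_def)
  next
    case False
    have "integral {p..x} v + integral {x..0} v = integral {p..0} v"
      using Henstock_Kurzweil_Integration.integral_combine[where a=p and c=x and b=0 and f=v] False p0 x ints[of 0] by auto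
    then show ?thesis using False by (simp add: sint_def)
  qed
  have "((\<lambda>x. integral {p..x} v) has_real_derivative v t) (at t within {p..q})"
    using integral_has_real_derivative[OF cpq, of t] p0 by auto
  then have "((\<lambda>x. integral {p..x} v) has_real_derivative v t) (at t)"
    using at_within_Icc_at[of p t q] p0 by simp
  then have "((\<lambda>x. integral {p..x} v - integral {p..0} v) has_real_derivative v t) (at t)"
    by (auto intro!: derivative_eq_intros)
  then show ?thesis
    by (rule has_field_derivative_transform_within_open[of _ _ _ "{p<..<q}"]) (use p0 eq in auto)
qed



definition EE :: "real \<Rightarrow> real \<Rightarrow> real" where
  "EE w t = (if w = 0 then t else (1 - exp (- w * t)) / w)"
definition RR :: "real \<Rightarrow> real \<Rightarrow> real \<Rightarrow> real" where
  "RR r0 w t = r0 + (1 - w * r0) * EE w t"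

lemma dEE: "(EE w has_real_derivative exp (- w * t)) (at t)"
proof (cases "w = 0")
  case True then show ?thesis unfolding EE_def by (auto intro!: derivative_eq_intros)
next
  case False
  have "((\<lambda>t. (1 - exp (- w * t)) / w) has_real_derivative exp (- w * t)) (at t)"
    using False by (auto intro!: derivative_eq_intros)
  then show ?thesis using False unfolding EE_def by simp
qed

lemma EE_one: "1 - w * EE w t = exp (- w * t)"
  by (simp add: EE_def)

lemma dRR: "(RR r0 w has_real_derivative (1 - w * RR r0 w t)) (at t)"
proof -
  have "(RR r0 w has_real_derivative (1 - w * r0) * exp (- w * t)) (at t)"
    unfolding RR_def by (auto intro!: derivative_eq_intros dEE)
  moreover have "(1 - w * r0) * exp (- w * t) = 1 - w * RR r0 w t"
    unfolding RR_def EE_one[symmetric] by (simp add: algebra_simps)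
  ultimately show ?thesis by simp
qed

lemma RR_one: "1 - w * RR r0 w t = (1 - w * r0) * exp (- w * t)"
  unfolding RR_def EE_one[symmetric] by (simp add: algebra_simps)

lemma RR_mono:
  assumes "1 - w * r0 > 0" "x < y"
  shows "RR r0 w x < RR r0 w y"
proof (rule DERIV_pos_imp_increasing[OF assms(2)])
  fix s show "\<exists>d. DERIV (RR r0 w) s :> d \<and> d > 0"
    using dRR[of r0 w s] RR_one[of w r0 s] assms(1) by auto
qed

lemma RR_LL:
  assumes "1 - w * x > 0"
  shows "RR r0 w (LL x w) = r0 - (1 - w * r0) * x / (1 - w * x)"
proof (cases "w = 0")
  case True then show ?thesis by (simp add: RR_def EE_def LL_def)
next
  case False
  have "exp (- w * LL x w) = 1 / (1 - w * x)"
    using False assms by (simp add: LL_def exp_minus inverse_eq_divide)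
  then have "EE w (LL x w) = - x / (1 - w * x)"
    using False assms unfolding EE_def by (simp add: field_simps)
  then show ?thesis by (simp add: RR_def)
qed



lemma real_inv:
  fixes v S :: "real \<Rightarrow> real" and I :: "real set"
  assumes intv: "\<And>x y z. x \<in> I \<Longrightarrow> z \<in> I \<Longrightarrow> x \<le> y \<Longrightarrow> y \<le> z \<Longrightarrow> y \<in> I"
    and I0: "0 \<in> I"
    and dv: "\<And>t. t \<in> I \<Longrightarrow> (v has_real_derivative (a - c0 * v t - c1 * (v t)\<^sup>2)) (at t)"
    and dS: "\<And>t. t \<in> I \<Longrightarrow> (S has_real_derivative v t) (at t)"
    and init: "v 0 = vc" and disc: "disc a c0 c1 \<ge> 0" and c0: "c0 \<ge> 0" and c1: "c1 > 0" and vc: "vc > 0"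
    and pos1: "1 - wR a c0 c1 * (1 / gammaR a c0 c1 vc) > 0"
    and t: "t \<in> I"
  shows "RR (1 / gammaR a c0 c1 vc) (wR a c0 c1) t > 0 \<and>
         (c1 * v t + alphaR a c0 c1) * RR (1 / gammaR a c0 c1 vc) (wR a c0 c1) t = 1"
proof -
  define w where "w = wR a c0 c1"
  define \<alpha> where "\<alpha> = alphaR a c0 c1"
  define \<gamma> where "\<gamma> = gammaR a c0 c1 vc"
  define r0 where "r0 = 1 / \<gamma>"
  define R where "R = RR r0 w"
  have w0: "w \<ge> 0" using disc by (simp add: w_def wR_def)
  have w2: "w * w = c0 * c0 + 4 * a * c1"
    using disc by (simp add: w_def wR_def disc_def power2_eq_square[symmetric])
  have \<alpha>: "\<alpha> = (w + c0) / 2" by (simp add: \<alpha>_def alphaR_def w_def)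
  have \<alpha>0: "\<alpha> \<ge> 0" using \<alpha> w0 c0 by simp
  have \<gamma>: "\<gamma> = c1 * vc + \<alpha>" by (simp add: \<gamma>_def gammaR_def \<alpha>_def)
  have \<gamma>0: "\<gamma> > 0" using \<gamma> \<alpha>0 c1 vc by (simp add: add_pos_nonneg)
  have alg: "c1 * (a - c0 * x - c1 * x\<^sup>2) - w * (c1 * x + \<alpha>) + (c1 * x + \<alpha>)\<^sup>2 = 0" for x
  proof -
    have "c1 * (a - c0 * x - c1 * x\<^sup>2) - w * (c1 * x + \<alpha>) + (c1 * x + \<alpha>)\<^sup>2
        = (4 * a * c1 + c0 * c0 - w * w) / 4"
      unfolding \<alpha> by (simp add: power2_eq_square field_simps)
    then show ?thesis using w2 by simp
  qed
  define z where "z = (\<lambda>t. ((c1 * v t + \<alpha>) * R t - 1) * exp (c1 * S t + \<alpha> * t))"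
  have dz: "(z has_real_derivative 0) (at s)" if s: "s \<in> I" for s
  proof -
    have "(z has_real_derivative
        (c1 * (a - c0 * v s - c1 * (v s)\<^sup>2) * R s + (c1 * v s + \<alpha>) * (1 - w * R s)) * exp (c1 * S s + \<alpha> * s)
        + ((c1 * v s + \<alpha>) * R s - 1) * (exp (c1 * S s + \<alpha> * s) * (c1 * v s + \<alpha>))) (at s)"
      unfolding z_def R_def
      by (rule derivative_eq_intros dv[OF s] dS[OF s] dRR refl | simp add: algebra_simps)+
    moreover have "(c1 * (a - c0 * v s - c1 * (v s)\<^sup>2) * R s + (c1 * v s + \<alpha>) * (1 - w * R s)) * exp (c1 * S s + \<alpha> * s)
        + ((c1 * v s + \<alpha>) * R s - 1) * (exp (c1 * S s + \<alpha> * s) * (c1 * v s + \<alpha>))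
        = R s * (c1 * (a - c0 * v s - c1 * (v s)\<^sup>2) - w * (c1 * v s + \<alpha>) + (c1 * v s + \<alpha>)\<^sup>2) * exp (c1 * S s + \<alpha> * s)"
      by (simp add: algebra_simps power2_eq_square)
    ultimately show ?thesis using alg[of "v s"] by simp
  qed
  have cI: "convex I"
  proof (rule is_interval_convex)
    show "is_interval I" unfolding is_interval_1 using intv by blast
  qed
  obtain c where c: "\<forall>x\<in>I. z x = c"
    using has_field_derivative_zero_constant[OF cI, of z] dz has_field_derivative_at_within by blast
  have R0: "R 0 = r0" by (simp add: R_def RR_def EE_def)
  have "z 0 = 0" unfolding z_def R0 r0_def using init \<gamma> \<gamma>0 by simp
  then have "z t = 0" using c I0 t by auto
  then have prod: "(c1 * v t + \<alpha>) * R t = 1" by (simp add: z_def)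
  have pos1': "1 - w * r0 > 0" using pos1 by (simp add: w_def r0_def \<gamma>_def)
  have Rpos: "R t > 0"
  proof (rule ccontr)
    assume "\<not> R t > 0"
    then have Rt: "R t \<le> 0" by simp
    have r0p: "r0 > 0" using \<gamma>0 by (simp add: r0_def)
    show False
    proof (cases "t < 0")
      case False
      then have "R 0 \<le> R t" using RR_mono[OF pos1', of 0 t] unfolding R_def
        by (cases "t = 0") auto
      then show False using Rt R0 r0p by simp
    next
      case True
      have cR: "continuous_on {t..0} R"
        by (rule continuous_at_imp_continuous_on) (use dRR DERIV_isCont R_def in blast)
      obtain s where s: "t \<le> s" "s \<le> 0" "R s = 0"
        using IVT'[of R t 0 0] Rt R0 r0p True cR by auto
      have sI: "s \<in> I" using intv[OF t I0 s(1,2)] .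
      have "z s = 0" using c I0 sI \<open>z 0 = 0\<close> by auto
      then have "(c1 * v s + \<alpha>) * R s = 1" by (simp add: z_def)
      then show False using s by simp
    qed
  qed
  show ?thesis using Rpos prod by (simp add: R_def r0_def \<gamma>_def w_def \<alpha>_def)
qed



lemma interval_facts:
  fixes lo :: real and hi :: ereal
  shows "open {t. lo < t \<and> ereal t < hi}"
    and "\<And>x y z. x \<in> {t. lo < t \<and> ereal t < hi} \<Longrightarrow> z \<in> {t. lo < t \<and> ereal t < hi} \<Longrightarrow> x \<le> y \<Longrightarrow> y \<le> z
           \<Longrightarrow> y \<in> {t. lo < t \<and> ereal t < hi}"
proof -
  show "open {t. lo < t \<and> ereal t < hi}"
  proof (cases hi)
    case (real r)
    then have "{t. lo < t \<and> ereal t < hi} = {lo<..<r}" by auto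
    then show ?thesis by simp
  next
    case PInf
    then have "{t. lo < t \<and> ereal t < hi} = {lo<..}" by auto
    then show ?thesis by simp
  next
    case MInf
    then show ?thesis by simp
  qed
  fix x y z assume "x \<in> {t. lo < t \<and> ereal t < hi}" "z \<in> {t. lo < t \<and> ereal t < hi}" "x \<le> y" "y \<le> z"
  then show "y \<in> {t. lo < t \<and> ereal t < hi}"
    by (auto intro: le_less_trans[of "ereal y" "ereal z"])
qed

lemma w_facts:
  assumes "disc a c0 c1 \<ge> 0"
  shows "wR a c0 c1 \<ge> 0" "wR a c0 c1 * wR a c0 c1 = c0 * c0 + 4 * a * c1"
    "alphaR a c0 c1 * betaR a c0 c1 = a * c1"
    "alphaR a c0 c1 - betaR a c0 c1 = c0" "alphaR a c0 c1 + betaR a c0 c1 = wR a c0 c1"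
proof -
  show w0: "wR a c0 c1 \<ge> 0" using assms by (simp add: wR_def)
  show w2: "wR a c0 c1 * wR a c0 c1 = c0 * c0 + 4 * a * c1"
    using assms by (simp add: wR_def disc_def power2_eq_square[symmetric])
  show "alphaR a c0 c1 * betaR a c0 c1 = a * c1"
    unfolding alphaR_def betaR_def using w2 by (simp add: field_simps)
  show "alphaR a c0 c1 - betaR a c0 c1 = c0" "alphaR a c0 c1 + betaR a c0 c1 = wR a c0 c1"
    unfolding alphaR_def betaR_def by (simp_all add: field_simps)
qed

lemma case_c:
  fixes v :: "real \<Rightarrow> real"
  assumes c0: "c0 \<ge> 0" and c1: "c1 > 0" and vc: "vc > 0"
    and disc: "disc a c0 c1 \<ge> 0" and a: "a \<ge> 0" and vcinf: "vc > vinf a c0 c1"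
    and dv: "\<And>t. t_inf a c0 c1 vc < t \<Longrightarrow> (v has_real_derivative (a - c0 * v t - c1 * (v t)\<^sup>2)) (at t)"
    and init: "v 0 = vc"
  shows "t_inf a c0 c1 vc < 0 \<and> (\<forall>t. t_inf a c0 c1 vc < t \<longrightarrow> v t > 0 \<and> a - c0 * v t - c1 * (v t)\<^sup>2 \<le> 0)"
proof -
  define w where "w = wR a c0 c1"
  define \<alpha> where "\<alpha> = alphaR a c0 c1"
  define \<beta> where "\<beta> = betaR a c0 c1"
  define \<gamma> where "\<gamma> = gammaR a c0 c1 vc"
  define r0 where "r0 = 1 / \<gamma>"
  define R where "R = RR r0 w"
  note wf = w_facts[OF disc, folded w_def \<alpha>_def \<beta>_def]
  have \<beta>0: "\<beta> \<ge> 0"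
  proof -
    have "c0 * c0 \<le> w * w" using wf(2) a c1 by simp
    then have "c0 \<le> w" using wf(1) c0 by (metis mult_mono' not_le mult_strict_mono')
    then show ?thesis using wf(4,5) by linarith
  qed
  have \<alpha>0: "\<alpha> \<ge> 0" using wf(4) \<beta>0 c0 by linarith
  have \<gamma>: "\<gamma> = c1 * vc + \<alpha>" by (simp add: \<gamma>_def gammaR_def \<alpha>_def)
  have \<gamma>0: "\<gamma> > 0" using \<gamma> \<alpha>0 c1 vc by (simp add: add_pos_nonneg)
  have c1vc: "c1 * vc > \<beta>" using vcinf c1 by (simp add: vinf_def \<beta>_def field_simps)
  have pos1: "1 - w * r0 > 0"
  proof -
    have "\<gamma> - w > 0" using \<gamma> c1vc wf(4,5) by linarith
    then show ?thesis using \<gamma>0 by (simp add: r0_def field_simps)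
  qed
  have Rinf: "R (t_inf a c0 c1 vc) = 0"
  proof -
    have "t_inf a c0 c1 vc = LL r0 w" by (simp add: t_inf_def r0_def \<gamma>_def w_def)
    then show ?thesis using RR_LL[OF pos1, of r0] pos1 by (simp add: R_def)
  qed
  have R0: "R 0 = r0" by (simp add: R_def RR_def EE_def)
  have r0p: "r0 > 0" using \<gamma>0 by (simp add: r0_def)
  have tinf: "t_inf a c0 c1 vc < 0"
  proof (rule ccontr)
    assume "\<not> t_inf a c0 c1 vc < 0"
    then have "R 0 \<le> R (t_inf a c0 c1 vc)"
      using RR_mono[OF pos1, of 0 "t_inf a c0 c1 vc"] unfolding R_def
      by (cases "t_inf a c0 c1 vc = 0") auto
    then show False using Rinf R0 r0p by simp
  qed
  define I where "I = {t. t_inf a c0 c1 vc < t \<and> ereal t < (\<infinity>::ereal)}"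
  have Ieq: "I = {t. t_inf a c0 c1 vc < t}" by (auto simp: I_def)
  note ifs = interval_facts[where lo="t_inf a c0 c1 vc" and hi="\<infinity>::ereal", folded I_def]
  have I0: "0 \<in> I" using tinf by (simp add: Ieq)
  have cv: "continuous_on I v"
    by (rule continuous_at_imp_continuous_on) (use dv DERIV_isCont Ieq in blast)
  have dS: "(sint v has_real_derivative v t) (at t)" if "t \<in> I" for t
    using sint_deriv[OF ifs(1) _ I0 that cv] ifs(2) by blast
  have main: "v t > 0 \<and> a - c0 * v t - c1 * (v t)\<^sup>2 \<le> 0" if t: "t \<in> I" for t
  proof -
    have inv: "R t > 0" "(c1 * v t + \<alpha>) * R t = 1"
      using real_inv[of I v a c0 c1 "sint v" vc t] ifs(2) I0 dv dS init disc c0 c1 vc pos1 t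
      unfolding Ieq R_def r0_def \<gamma>_def w_def \<alpha>_def by auto
    have "1 - w * R t > 0" using RR_one[of w r0 t] pos1 by (simp add: R_def)
    moreover have "(c1 * v t - \<beta>) * R t = 1 - w * R t"
      using inv(2) wf(4,5) by (simp add: algebra_simps) (simp add: algebra_simps flip: wf(5))
    ultimately have "(c1 * v t - \<beta>) * R t > 0" by simp
    then have d1: "c1 * v t - \<beta> > 0" using inv(1) zero_less_mult_pos2 by blast
    have d2: "c1 * v t + \<alpha> > 0" using inv zero_less_mult_pos2 by (metis zero_less_one)
    have "c1 * v t > 0" using d1 \<beta>0 by linarith
    then have vpos: "v t > 0" using c1 by (simp add: zero_less_mult_iff)
    have "c1 * (a - c0 * v t - c1 * (v t)\<^sup>2) = c1 * a - c1 * c0 * v t - c1 * c1 * v t * v t"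
      by (simp add: algebra_simps power2_eq_square)
    also have "\<dots> = \<alpha> * \<beta> - c1 * (\<alpha> - \<beta>) * v t - c1 * c1 * v t * v t"
      using wf(3,4) by (simp add: mult.commute)
    also have "\<dots> = - ((c1 * v t - \<beta>) * (c1 * v t + \<alpha>))"
      by (simp add: algebra_simps)
    finally have "c1 * (a - c0 * v t - c1 * (v t)\<^sup>2) = - ((c1 * v t - \<beta>) * (c1 * v t + \<alpha>))" .
    moreover have "(c1 * v t - \<beta>) * (c1 * v t + \<alpha>) > 0" using d1 d2 by simp
    ultimately have "c1 * (a - c0 * v t - c1 * (v t)\<^sup>2) < 0" by simp
    then have "a - c0 * v t - c1 * (v t)\<^sup>2 < 0" using c1 by (simp add: mult_less_0_iff)
    then show ?thesis using vpos by simp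
  qed
  show ?thesis using tinf main Ieq by auto
qed



lemma alg_d:
  fixes c1 \<alpha> \<beta> vc a w \<gamma> :: real
  assumes c1: "c1 > 0" and al: "\<alpha> > 0" and be: "\<beta> < 0" and vc: "vc > 0"
    and a: "a * c1 = \<alpha> * \<beta>" and w: "w = \<alpha> + \<beta>" and g: "\<gamma> = c1 * vc + \<alpha>"
  shows "1 / \<gamma> - (1 - w * (1 / \<gamma>)) * (vc / (a + vc * \<beta>)) / (1 - w * (vc / (a + vc * \<beta>))) = 1 / \<alpha>"
proof -
  have a': "a = \<alpha> * \<beta> / c1" using a c1 by (simp add: field_simps)
  have an: "a < 0" unfolding a' using al be c1 by (simp add: divide_neg_pos mult_pos_neg)
  have "vc * \<beta> < 0" using vc be by (simp add: mult_pos_neg)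
  then have n1: "a + vc * \<beta> < 0" using an by linarith
  have g0: "\<gamma> > 0" using g c1 vc al by (smt (verit) mult_pos_pos)
  have n2': "\<alpha> * \<beta> - \<alpha> * vc * c1 < 0" using al be vc c1 by (smt (verit) mult_pos_pos mult_pos_neg)
  have n2: "a - \<alpha> * vc < 0" using an al vc by (smt (verit) mult_pos_pos)
  have e1: "1 - w * (vc / (a + vc * \<beta>)) = (a - \<alpha> * vc) / (a + vc * \<beta>)"
    using n1 w by (simp add: field_simps)
  have e2: "(vc / (a + vc * \<beta>)) / (1 - w * (vc / (a + vc * \<beta>))) = vc / (a - \<alpha> * vc)"
  proof -
    have "(vc / (a + vc * \<beta>)) / ((a - \<alpha> * vc) / (a + vc * \<beta>)) = (vc / (a + vc * \<beta>)) * ((a + vc * \<beta>) / (a - \<alpha> * vc))"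
      by simp
    also have "\<dots> = vc / (a - \<alpha> * vc)" using n1 by simp
    finally show ?thesis unfolding e1 .
  qed
  have "1 / \<gamma> - (1 - w * (1 / \<gamma>)) * (vc / (a + vc * \<beta>)) / (1 - w * (vc / (a + vc * \<beta>)))
      = 1 / \<gamma> - (1 - w / \<gamma>) * (vc / (a - \<alpha> * vc))"
    using e2 by (simp add: mult.assoc)
  also have "\<dots> = 1 / \<alpha>"
  proof -
    have k: "c1 * vc - \<beta> > 0" using c1 vc be by (smt (verit) mult_pos_pos)
    have e3: "a - \<alpha> * vc = - \<alpha> * (c1 * vc - \<beta>) / c1" using a' c1 by (simp add: field_simps)
    have e4: "1 - w / \<gamma> = (c1 * vc - \<beta>) / \<gamma>" using g w g0 by (simp add: field_simps)
    have e5: "(1 - w / \<gamma>) * (vc / (a - \<alpha> * vc)) = - (c1 * vc) / (\<alpha> * \<gamma>)"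
      unfolding e3 e4 using k al c1 g0 by (simp add: field_simps)
    have "1 / \<gamma> - - (c1 * vc) / (\<alpha> * \<gamma>) = (\<alpha> + c1 * vc) / (\<alpha> * \<gamma>)"
      using al g0 by (simp add: field_simps)
    also have "\<dots> = \<gamma> / (\<alpha> * \<gamma>)" by (metis add.commute g)
    also have "\<dots> = 1 / \<alpha>" using g0 by simp
    finally show ?thesis unfolding e5 .
  qed
  finally show ?thesis .
qed

lemma case_d:
  fixes v :: "real \<Rightarrow> real"
  assumes c0: "c0 \<ge> 0" and c1: "c1 > 0" and vc: "vc > 0"
    and disc: "disc a c0 c1 \<ge> 0" and a: "a < 0"
    and dv: "\<And>t. t_inf a c0 c1 vc < t \<Longrightarrow> t < t_circ a c0 c1 vc \<Longrightarrow>
        (v has_real_derivative (a - c0 * v t - c1 * (v t)\<^sup>2)) (at t)"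
    and init: "v 0 = vc"
  shows "t_inf a c0 c1 vc < 0 \<and> 0 < t_circ a c0 c1 vc \<and>
     (\<forall>t. t_inf a c0 c1 vc < t \<and> t < t_circ a c0 c1 vc \<longrightarrow> v t > 0 \<and> a - c0 * v t - c1 * (v t)\<^sup>2 \<le> 0)"
proof -
  define w where "w = wR a c0 c1"
  define \<alpha> where "\<alpha> = alphaR a c0 c1"
  define \<beta> where "\<beta> = betaR a c0 c1"
  define \<gamma> where "\<gamma> = gammaR a c0 c1 vc"
  define r0 where "r0 = 1 / \<gamma>"
  define R where "R = RR r0 w"
  note wf = w_facts[OF disc, folded w_def \<alpha>_def \<beta>_def]
  have wc0: "w < c0"
  proof (rule ccontr)
    assume "\<not> w < c0"
    then have "c0 * c0 \<le> w * w" using c0 by (intro mult_mono) auto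
    moreover have "a * c1 < 0" using a c1 by (simp add: mult_neg_pos)
    ultimately show False using wf(2) by linarith
  qed
  have \<beta>0: "\<beta> < 0" using wf(4,5) wc0 by linarith
  have \<alpha>0: "\<alpha> > 0" using wf(4,5) wc0 wf(1) by linarith
  have \<gamma>: "\<gamma> = c1 * vc + \<alpha>" by (simp add: \<gamma>_def gammaR_def \<alpha>_def)
  have c1vc: "c1 * vc > 0" using c1 vc by simp
  have \<gamma>0: "\<gamma> > \<alpha>" using \<gamma> c1vc by simp
  have pos1: "1 - w * r0 > 0"
  proof -
    have "\<gamma> - w > 0" using \<gamma> c1vc wf(4,5) \<beta>0 by linarith
    then show ?thesis using \<gamma>0 \<alpha>0 by (simp add: r0_def field_simps)
  qed
  have Rinf: "R (t_inf a c0 c1 vc) = 0"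
  proof -
    have "t_inf a c0 c1 vc = LL r0 w" by (simp add: t_inf_def r0_def \<gamma>_def w_def)
    then show ?thesis using RR_LL[OF pos1, of r0] pos1 by (simp add: R_def)
  qed
  define X where "X = vc / (a + vc * \<beta>)"
  have "vc * \<beta> < 0" using vc \<beta>0 by (simp add: mult_pos_neg)
  then have "a + vc * \<beta> < 0" using a by linarith
  then have "X < 0" using vc by (simp add: X_def divide_pos_neg)
  then have posX: "1 - w * X > 0" using wf(1) by (smt (verit) mult_nonneg_nonpos)
  have Rcirc: "R (t_circ a c0 c1 vc) = 1 / \<alpha>"
  proof -
    have "t_circ a c0 c1 vc = LL X w" by (simp add: t_circ_def X_def w_def \<beta>_def)
    then have "R (t_circ a c0 c1 vc) = r0 - (1 - w * r0) * X / (1 - w * X)"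
      using RR_LL[OF posX, of r0] by (simp add: R_def)
    also have "\<dots> = 1 / \<alpha>"
      unfolding r0_def X_def
      by (rule alg_d[OF c1 \<alpha>0 \<beta>0 vc wf(3)[symmetric, simplified mult.commute] wf(5)[symmetric] \<gamma>]) 
    finally show ?thesis .
  qed
  have R0: "R 0 = r0" by (simp add: R_def RR_def EE_def)
  have r0p: "r0 > 0" using \<gamma>0 \<alpha>0 by (simp add: r0_def)
  have r0a: "r0 < 1 / \<alpha>" using \<gamma>0 \<alpha>0 by (simp add: r0_def frac_less2)
  have Rm: "R x < R y" if "x < y" for x y using RR_mono[OF pos1 that] by (simp add: R_def)
  have tinf: "t_inf a c0 c1 vc < 0"
  proof (rule ccontr)
    assume "\<not> t_inf a c0 c1 vc < 0"
    then have "R 0 \<le> R (t_inf a c0 c1 vc)"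
      using Rm[of 0 "t_inf a c0 c1 vc"] by (cases "t_inf a c0 c1 vc = 0") auto
    then show False using Rinf R0 r0p by simp
  qed
  have tcirc: "0 < t_circ a c0 c1 vc"
  proof (rule ccontr)
    assume "\<not> 0 < t_circ a c0 c1 vc"
    then have "R (t_circ a c0 c1 vc) \<le> R 0"
      using Rm[of "t_circ a c0 c1 vc" 0] by (cases "t_circ a c0 c1 vc = 0") auto
    then show False using Rcirc R0 r0a by simp
  qed
  define I where "I = {t. t_inf a c0 c1 vc < t \<and> ereal t < ereal (t_circ a c0 c1 vc)}"
  have Ieq: "I = {t. t_inf a c0 c1 vc < t \<and> t < t_circ a c0 c1 vc}" by (auto simp: I_def)
  note ifs = interval_facts[where lo="t_inf a c0 c1 vc" and hi="ereal (t_circ a c0 c1 vc)", folded I_def]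
  have I0: "0 \<in> I" using tinf tcirc by (simp add: Ieq)
  have dv': "\<And>t. t \<in> I \<Longrightarrow> (v has_real_derivative (a - c0 * v t - c1 * (v t)\<^sup>2)) (at t)"
    using dv Ieq by blast
  have cv: "continuous_on I v"
    by (rule continuous_at_imp_continuous_on) (use dv' DERIV_isCont in blast)
  have dS: "(sint v has_real_derivative v t) (at t)" if "t \<in> I" for t
    using sint_deriv[OF ifs(1) _ I0 that cv] ifs(2) by blast
  have main: "v t > 0 \<and> a - c0 * v t - c1 * (v t)\<^sup>2 \<le> 0" if t: "t \<in> I" for t
  proof -
    have pos1': "1 - wR a c0 c1 * (1 / gammaR a c0 c1 vc) > 0"
      using pos1 unfolding w_def r0_def \<gamma>_def .
    note inv0 = real_inv[OF ifs(2) I0 dv' dS init disc c0 c1 vc pos1' t]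
    have inv: "R t > 0" "(c1 * v t + \<alpha>) * R t = 1"
      using inv0 unfolding R_def r0_def \<gamma>_def w_def \<alpha>_def by auto
    have "R t < 1 / \<alpha>" using Rm[of t "t_circ a c0 c1 vc"] Rcirc t Ieq by auto
    then have "\<alpha> * R t < 1" using \<alpha>0 by (simp add: field_simps)
    then have "(c1 * v t) * R t > 0" using inv(2) by (simp add: algebra_simps)
    then have "c1 * v t > 0" using inv(1) zero_less_mult_pos2 by blast
    then have vpos: "v t > 0" using c1 by (simp add: zero_less_mult_iff)
    have "c0 * v t \<ge> 0" "c1 * (v t)\<^sup>2 \<ge> 0" using c0 c1 vpos by auto
    then show ?thesis using vpos a by linarith
  qed
  show ?thesis using tinf tcirc main Ieq by auto
qed



lemma theta0_eq:
  fixes W c0 c1 vc a :: real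
  assumes W: "W > 0" and W2: "W * W = - (c0 * c0) - 4 * a * c1" and c0: "c0 \<ge> 0" and c1: "c1 > 0"
    and vc: "vc > 0" and a: "a < 0"
  shows "arctan (vc * W / (vc * c0 + 2 * \<bar>a\<bar>)) = arctan ((2 * c1 * vc + c0) / W) - arctan (c0 / W)"
proof -
  define u0 where "u0 = (2 * c1 * vc + c0) / W"
  define A where "A = arctan u0"
  define B where "B = arctan (c0 / W)"
  have u0p: "u0 > 0" using W c1 vc c0 by (simp add: u0_def add_pos_nonneg)
  have A: "0 < A" "A < pi / 2" using u0p arctan_ubound[of u0] by (auto simp: A_def)
  have B: "0 \<le> B" "B < pi / 2" using W c0 arctan_ubound[of "c0 / W"] by (auto simp: B_def)
  have cA: "cos A \<noteq> 0" using A by (intro less_imp_neq[symmetric] cos_gt_zero_pi) auto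
  have cB: "cos B \<noteq> 0" using B by (intro less_imp_neq[symmetric] cos_gt_zero_pi) auto
  have cAB: "cos (A - B) \<noteq> 0" using A B by (intro less_imp_neq[symmetric] cos_gt_zero_pi) auto
  have t: "tan (A - B) = (u0 - c0 / W) / (1 + u0 * (c0 / W))"
    using tan_diff[OF cA cB cAB] by (simp add: A_def B_def tan_arctan)
  have n: "u0 - c0 / W = 2 * c1 * vc / W" using W by (simp add: u0_def field_simps)
  have num: "W * W + (2 * c1 * vc + c0) * c0 = 2 * c1 * (vc * c0 - 2 * a)"
    using W2 by (simp add: algebra_simps)
  have d: "1 + u0 * (c0 / W) = 2 * c1 * (vc * c0 - 2 * a) / (W * W)"
  proof -
    have "1 + u0 * (c0 / W) = (W * W + (2 * c1 * vc + c0) * c0) / (W * W)"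
      using W by (simp add: u0_def field_simps)
    then show ?thesis using num by simp
  qed
  have pos: "vc * c0 - 2 * a > 0" using vc c0 a by (smt (verit) mult_nonneg_nonneg)
  have "tan (A - B) = vc * W / (vc * c0 + 2 * \<bar>a\<bar>)"
    unfolding t n d using W pos c1 a by (simp add: field_simps)
  then have "arctan (vc * W / (vc * c0 + 2 * \<bar>a\<bar>)) = arctan (tan (A - B))" by simp
  also have "\<dots> = A - B" using A B by (intro arctan_tan) auto
  finally show ?thesis by (simp add: A_def B_def u0_def)
qed

lemma case_e:
  fixes v :: "real \<Rightarrow> real"
  assumes c0: "c0 \<ge> 0" and c1: "c1 > 0" and vc: "vc > 0"
    and disc: "disc a c0 c1 < 0"
    and dv: "\<And>t. t_vinf a c0 c1 vc < t \<Longrightarrow> t < t_vcirc a c0 c1 vc \<Longrightarrow>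
        (v has_real_derivative (a - c0 * v t - c1 * (v t)\<^sup>2)) (at t)"
    and init: "v 0 = vc"
  shows "t_vinf a c0 c1 vc < 0 \<and> 0 < t_vcirc a c0 c1 vc \<and>
     (\<forall>t. t_vinf a c0 c1 vc < t \<and> t < t_vcirc a c0 c1 vc \<longrightarrow> v t > 0 \<and> a - c0 * v t - c1 * (v t)\<^sup>2 \<le> 0)"
proof -
  define W where "W = wAbs a c0 c1"
  have W: "W > 0" using disc by (simp add: W_def wAbs_def)
  have W2: "W * W = - (c0 * c0) - 4 * a * c1"
    using disc by (simp add: W_def wAbs_def disc_def power2_eq_square[symmetric])
  have a: "a < 0"
  proof -
    have "c0 * c0 + 4 * a * c1 < 0" using disc by (simp add: disc_def power2_eq_square)
    moreover have "c0 * c0 \<ge> 0" by simp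
    ultimately have "a * c1 < 0" by linarith
    then show ?thesis using c1 by (simp add: mult_less_0_iff)
  qed
  define A where "A = arctan ((2 * c1 * vc + c0) / W)"
  define B where "B = arctan (c0 / W)"
  have th0: "theta0 a c0 c1 vc = A - B"
    unfolding theta0_def A_def B_def W_def[symmetric] using theta0_eq[OF W W2 c0 c1 vc a] .
  have th0p: "theta0 a c0 c1 vc > 0"
  proof -
    have "vc * W > 0" using vc W by simp
    moreover have "vc * c0 + 2 * \<bar>a\<bar> > 0" using vc c0 a by (smt (verit) mult_nonneg_nonneg)
    ultimately show ?thesis by (simp add: theta0_def W_def)
  qed
  have th1p: "theta1 a c0 c1 vc > 0"
  proof -
    have "2 * c1 * vc + c0 > 0" using c1 vc c0 by (smt (verit) mult_pos_pos)
    then show ?thesis using W by (simp add: theta1_def W_def)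
  qed
  have tvc: "t_vcirc a c0 c1 vc = 2 * (A - B) / W" by (simp add: t_vcirc_def th0 W_def)
  have tvcp: "0 < t_vcirc a c0 c1 vc" using th0p W by (simp add: t_vcirc_def W_def)
  have tvin: "t_vinf a c0 c1 vc < 0" using th1p W by (simp add: t_vinf_def W_def)
  define I where "I = {t. t_vinf a c0 c1 vc < t \<and> ereal t < ereal (t_vcirc a c0 c1 vc)}"
  have Ieq: "I = {t. t_vinf a c0 c1 vc < t \<and> t < t_vcirc a c0 c1 vc}" by (auto simp: I_def)
  note ifs = interval_facts[where lo="t_vinf a c0 c1 vc" and hi="ereal (t_vcirc a c0 c1 vc)", folded I_def]
  have I0: "0 \<in> I" using tvin tvcp by (simp add: Ieq)
  have dv': "\<And>t. t \<in> I \<Longrightarrow> (v has_real_derivative (a - c0 * v t - c1 * (v t)\<^sup>2)) (at t)"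
    using dv Ieq by blast
  define u where "u = (\<lambda>t. (2 * c1 * v t + c0) / W)"
  define h where "h = (\<lambda>t. arctan (u t) + W * t / 2)"
  have key: "W * W + (2 * c1 * x + c0)\<^sup>2 = - 4 * c1 * (a - c0 * x - c1 * x\<^sup>2)" for x
    using W2 by (simp add: algebra_simps power2_eq_square)
  have dh: "(h has_real_derivative 0) (at s)" if s: "s \<in> I" for s
  proof -
    define P where "P = a - c0 * v s - c1 * (v s)\<^sup>2"
    have du: "(u has_real_derivative 2 * c1 * P / W) (at s)"
      unfolding u_def P_def using dv'[OF s] W by (auto intro!: derivative_eq_intros)
    have "(h has_real_derivative inverse (1 + (u s)\<^sup>2) * (2 * c1 * P / W) + W / 2) (at s)"
    proof -
      have d1: "((\<lambda>t. arctan (u t)) has_real_derivative inverse (1 + (u s)\<^sup>2) * (2 * c1 * P / W)) (at s)"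
        using DERIV_chain2[OF DERIV_arctan du] .
      have d2: "((\<lambda>t. W * t / 2) has_real_derivative W / 2) (at s)"
        by (auto intro!: derivative_eq_intros)
      show ?thesis unfolding h_def using DERIV_add[OF d1 d2] .
    qed
    moreover have "inverse (1 + (u s)\<^sup>2) * (2 * c1 * P / W) + W / 2 = 0"
    proof -
      have k: "W * W + (2 * c1 * v s + c0)\<^sup>2 = - 4 * c1 * P" using key[of "v s"] by (simp add: P_def)
      have "W * W + (2 * c1 * v s + c0)\<^sup>2 > 0" using W by (simp add: add_pos_nonneg)
      then have "c1 * P < 0" using k by linarith
      then have Pn: "P < 0" using c1 by (simp add: mult_less_0_iff)
      have us: "(u s)\<^sup>2 = (2 * c1 * v s + c0)\<^sup>2 / (W * W)"
        by (simp add: u_def power_divide power2_eq_square)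
      have "1 + (u s)\<^sup>2 = (W * W + (2 * c1 * v s + c0)\<^sup>2) / (W * W)"
        unfolding us using W by (simp add: add_divide_distrib)
      also have "\<dots> = - 4 * c1 * P / (W * W)" using k by simp
      finally have e: "1 + (u s)\<^sup>2 = - 4 * c1 * P / (W * W)" .
      have "inverse (1 + (u s)\<^sup>2) * (2 * c1 * P / W) = (W * W) / (- 4 * c1 * P) * (2 * c1 * P / W)"
        unfolding e by (simp add: inverse_eq_divide)
      also have "\<dots> = - W / 2" using W Pn c1 by (simp add: field_simps)
      finally show ?thesis by simp
    qed
    ultimately show ?thesis by simp
  qed
  have cI: "convex I"
  proof (rule is_interval_convex)
    show "is_interval I" unfolding is_interval_1 using ifs(2) by blast
  qed
  obtain c where c: "\<forall>x\<in>I. h x = c"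
    using has_field_derivative_zero_constant[OF cI, of h] dh has_field_derivative_at_within by blast
  have h0: "h 0 = A" by (simp add: h_def u_def A_def init)
  have main: "v t > 0 \<and> a - c0 * v t - c1 * (v t)\<^sup>2 \<le> 0" if t: "t \<in> I" for t
  proof -
    have "h t = A" using c t I0 h0 by auto
    then have ht: "arctan (u t) = A - W * t / 2" by (simp add: h_def)
    have "t < 2 * (A - B) / W" using t Ieq tvc by auto
    then have "W * t / 2 < A - B" using W by (simp add: field_simps)
    then have "arctan (c0 / W) < arctan (u t)" using ht B_def by simp
    then have "c0 / W < (2 * c1 * v t + c0) / W" by (simp add: arctan_less_iff u_def)
    then have "c0 < 2 * c1 * v t + c0" using W by (simp add: divide_less_cancel)
    then have "c1 * v t > 0" by simp
    then have vpos: "v t > 0" using c1 by (simp add: zero_less_mult_iff)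
    have "c0 * v t \<ge> 0" "c1 * (v t)\<^sup>2 \<ge> 0" using c0 c1 vpos by auto
    then show ?thesis using vpos a by linarith
  qed
  show ?thesis using tvin tvcp main Ieq by auto
qed


theorem mainTheorem11:
  fixes a c0 c1 vc tmin tstar :: real and tmax :: ereal and v :: "real \<Rightarrow> real"
  assumes c0: "c0 \<ge> 0" and c1: "c1 > 0" and vc: "vc > 0"
    and cases:
      "(disc a c0 c1 \<ge> 0 \<and> a \<ge> 0 \<and> vc > vinf a c0 c1
          \<and> tmin = t_inf a c0 c1 vc \<and> tmax = \<infinity>)
     \<or> (disc a c0 c1 \<ge> 0 \<and> a < 0
          \<and> tmin = t_inf a c0 c1 vc \<and> tmax = ereal (t_circ a c0 c1 vc))
     \<or> (disc a c0 c1 < 0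
          \<and> tmin = t_vinf a c0 c1 vc \<and> tmax = ereal (t_vcirc a c0 c1 vc))"
    and ode: "\<And>t. tmin < t \<Longrightarrow> ereal t < tmax \<Longrightarrow>
               (v has_real_derivative (a - c0 * v t - c1 * (v t)\<^sup>2)) (at t)"
    and init: "v 0 = vc"
    and tstar: "tmin < tstar" "ereal tstar < tmax"
  shows "let f = (\<lambda>t. sint v t - sint v tstar); tk = newton_seq f v tmin in
           (\<forall>k. tmin < tk k \<and> ereal (tk k) < tmax)
         \<and> tk \<longlonglongrightarrow> tstar
         \<and> (\<exists>C. \<forall>\<^sub>F k in sequentially.
                 tk k \<noteq> tstar \<longrightarrow> \<bar>tk (Suc k) - tstar\<bar> / \<bar>tk k - tstar\<bar>\<^sup>2 \<le> C)"
proof -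
  define I where "I = {t. tmin < t \<and> ereal t < tmax}"
  note ifs = interval_facts[where lo=tmin and hi=tmax, folded I_def]
  have lower: "\<And>x. x \<in> I \<Longrightarrow> tmin < x" by (simp add: I_def)
  have down: "y \<in> I" if "x \<in> I" "tmin < y" "y \<le> x" for x y
  proof -
    have "ereal y \<le> ereal x" using that(3) by simp
    moreover have "ereal x < tmax" using that(1) by (simp add: I_def)
    ultimately have "ereal y < tmax" by (rule le_less_trans)
    then show ?thesis using that(2) by (simp add: I_def)
  qed
  have dv: "(v has_real_derivative (a - c0 * v t - c1 * (v t)\<^sup>2)) (at t)" if "t \<in> I" for t
    using ode that by (simp add: I_def)
  have key: "0 \<in> I \<and> (\<forall>t\<in>I. v t > 0 \<and> a - c0 * v t - c1 * (v t)\<^sup>2 \<le> 0)"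
    using cases
  proof (elim disjE conjE)
    assume h: "disc a c0 c1 \<ge> 0" "a \<ge> 0" "vc > vinf a c0 c1" "tmin = t_inf a c0 c1 vc" "tmax = \<infinity>"
    have r: "t_inf a c0 c1 vc < 0 \<and> (\<forall>t. t_inf a c0 c1 vc < t \<longrightarrow> v t > 0 \<and> a - c0 * v t - c1 * (v t)\<^sup>2 \<le> 0)"
    proof -
      have dd: "\<And>t. t_inf a c0 c1 vc < t \<Longrightarrow> (v has_real_derivative (a - c0 * v t - c1 * (v t)\<^sup>2)) (at t)" using ode h by auto
      show ?thesis by (rule case_c[OF c0 c1 vc h(1,2,3) dd init])
    qed
    then show ?thesis using h by (auto simp: I_def)
  next
    assume h: "disc a c0 c1 \<ge> 0" "a < 0" "tmin = t_inf a c0 c1 vc" "tmax = ereal (t_circ a c0 c1 vc)"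
    have r: "t_inf a c0 c1 vc < 0 \<and> 0 < t_circ a c0 c1 vc \<and>
     (\<forall>t. t_inf a c0 c1 vc < t \<and> t < t_circ a c0 c1 vc \<longrightarrow> v t > 0 \<and> a - c0 * v t - c1 * (v t)\<^sup>2 \<le> 0)"
    proof -
      have dd: "\<And>t. t_inf a c0 c1 vc < t \<Longrightarrow> t < t_circ a c0 c1 vc \<Longrightarrow> (v has_real_derivative (a - c0 * v t - c1 * (v t)\<^sup>2)) (at t)" using ode h by auto
      show ?thesis by (rule case_d[OF c0 c1 vc h(1,2) dd init])
    qed
    then show ?thesis using h by (auto simp: I_def)
  next
    assume h: "disc a c0 c1 < 0" "tmin = t_vinf a c0 c1 vc" "tmax = ereal (t_vcirc a c0 c1 vc)"
    have r: "t_vinf a c0 c1 vc < 0 \<and> 0 < t_vcirc a c0 c1 vc \<and>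
     (\<forall>t. t_vinf a c0 c1 vc < t \<and> t < t_vcirc a c0 c1 vc \<longrightarrow> v t > 0 \<and> a - c0 * v t - c1 * (v t)\<^sup>2 \<le> 0)"
    proof -
      have dd: "\<And>t. t_vinf a c0 c1 vc < t \<Longrightarrow> t < t_vcirc a c0 c1 vc \<Longrightarrow> (v has_real_derivative (a - c0 * v t - c1 * (v t)\<^sup>2)) (at t)" using ode h by auto
      show ?thesis by (rule case_e[OF c0 c1 vc h(1) dd init])
    qed
    then show ?thesis using h by (auto simp: I_def)
  qed
  have I0: "0 \<in> I" using key by blast
  have Is: "tstar \<in> I" using tstar by (simp add: I_def)
  have cv: "continuous_on I v"
    by (rule continuous_at_imp_continuous_on) (use dv DERIV_isCont in blast)
  have cv': "continuous_on I (\<lambda>t. a - c0 * v t - c1 * (v t)\<^sup>2)"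
    using cv by (intro continuous_intros)
  define F where "F = (\<lambda>t. sint v t - sint v tstar)"
  have dF: "(F has_real_derivative v t) (at t)" if "t \<in> I" for t
  proof -
    have "(sint v has_real_derivative v t) (at t)"
      using sint_deriv[OF ifs(1) _ I0 that cv] ifs(2) by blast
    then show ?thesis unfolding F_def by (auto intro!: derivative_eq_intros)
  qed
  have F0: "F tstar = 0" by (simp add: F_def)
  have pos: "\<And>t. t \<in> I \<Longrightarrow> v t > 0" and dec: "\<And>t. t \<in> I \<Longrightarrow> a - c0 * v t - c1 * (v t)\<^sup>2 \<le> 0"
    using key by auto
  have intv: "\<And>x y z. x \<in> I \<Longrightarrow> z \<in> I \<Longrightarrow> x \<le> y \<Longrightarrow> y \<le> z \<Longrightarrow> y \<in> I"
    using ifs(2) by blast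
  have res: "(\<forall>k. newton_seq F v tmin k \<in> I) \<and> newton_seq F v tmin \<longlonglongrightarrow> tstar
     \<and> (\<exists>C. \<forall>\<^sub>F k in sequentially. newton_seq F v tmin k \<noteq> tstar \<longrightarrow>
           \<bar>newton_seq F v tmin (Suc k) - tstar\<bar> / \<bar>newton_seq F v tmin k - tstar\<bar>\<^sup>2 \<le> C)"
    by (rule newton_generic[OF ifs(1) intv lower down I0 Is dF dv cv' pos dec F0])
  have mem: "newton_seq F v tmin k \<in> I \<longleftrightarrow> tmin < newton_seq F v tmin k \<and> ereal (newton_seq F v tmin k) < tmax" for k
    by (simp add: I_def)
  show ?thesis unfolding Let_def F_def[symmetric] using res unfolding mem .
qed

end
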